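(* Let $\nu_0$ be a probability measure on $[0,1]$ with $\nu_0((\frac12,1])>0$. Then there exists $k\in\mathbb{N}$ such that the following holds whenever $W>1$ and $(W-1)/\sigma_W$ (with $\sigma_W>0$) are large enough: if $\tilde\nu_0$ is the probability measure on pairs $(p,\varepsilon)$ whose $p$-marginal is $\nu_0$ and whose conditional law of $\varepsilon$ given $p$ is the Gaussian $\mathcal{N}(0,\sigma_W^2)$ truncated to the interval $(a(p),b(p))$ with $a(p)=-(W-1)p$, $b(p)=(W-1)(1-p)$, and $\mu$ is any probability measure on $([0,1]\times\mathbb{R})^{\mathbb{N}}$ with $\mu\ll\mu_0:=\prod_{n=1}^\infty\tilde\nu_0$, then $\mu(\mathcal{C}_I^w)=1$.
   Context: For a sequence $((p_i,\varepsilon_i))_{i=1}^\infty$ define weights $w_i:=1+(W-1)p_i^k+\varepsilon_i$ (so $w_i\in[1,W]$ under the truncation above). Let $X_1,X_2,\dots$ be independent random variables with values in $\{-1,+1\}$ and $\mathbb{P}(X_i=1)=p_i$. $\mathcal{C}_I^w$ is the set of sequences $((p_i,\varepsilon_i))_{i=1}^\infty$ for which the weighted Condorcet Jury Property holds: $\lim_{n\to\infty}\mathbb{P}\left(\sum_{i=1}^n w_iX_i>0\right)=1$. $\mu\ll\mu_0$ denotes absolute continuity. *)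

theory Defs
  imports "HOL-Probability.Probability"
begin

definition weight :: "real \<Rightarrow> nat \<Rightarrow> real \<times> real \<Rightarrow> real" where
  "weight W k pe = 1 + (W - 1) * (fst pe) ^ k + snd pe"

definition weighted_majority_prob :: "real \<Rightarrow> nat \<Rightarrow> (nat \<Rightarrow> real \<times> real) \<Rightarrow> nat \<Rightarrow> real" where
  "weighted_majority_prob W k s n =
     measure_pmf.prob (Pi_pmf {..<n} False (\<lambda>i. bernoulli_pmf (fst (s i))))
       {x. (\<Sum>i<n. weight W k (s i) * (if x i then 1 else -1)) > 0}"

definition CJP_weighted :: "real \<Rightarrow> nat \<Rightarrow> (nat \<Rightarrow> real \<times> real) set" where
  "CJP_weighted W k = {s. (weighted_majority_prob W k s \<longlonglongrightarrow> 1)}"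

definition trunc_normal_density :: "real \<Rightarrow> real \<Rightarrow> real \<Rightarrow> real \<Rightarrow> real" where
  "trunc_normal_density \<sigma> a b x =
     indicator {a<..<b} x * normal_density 0 \<sigma> x /
       integral\<^sup>L lborel (\<lambda>y. indicator {a<..<b} y * normal_density 0 \<sigma> y)"

definition pair_law :: "real measure \<Rightarrow> real \<Rightarrow> real \<Rightarrow> (real \<times> real) measure" where
  "pair_law \<nu>0 W \<sigma> = density (\<nu>0 \<Otimes>\<^sub>M lborel)
     (\<lambda>(p, e). ennreal (trunc_normal_density \<sigma> (-(W - 1) * p) ((W - 1) * (1 - p)) e))"

definition mu0 :: "real measure \<Rightarrow> real \<Rightarrow> real \<Rightarrow> (nat \<Rightarrow> real \<times> real) measure" where
  "mu0 \<nu>0 W \<sigma> = PiM UNIV (\<lambda>_. pair_law \<nu>0 W \<sigma>)"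

end

theory Submission
  imports Defs
begin


lemma tnd_nonneg: "0 \<le> trunc_normal_density s a b x"
  unfolding trunc_normal_density_def
  by (intro divide_nonneg_nonneg mult_nonneg_nonneg integral_nonneg_AE) (auto simp: indicator_def)

lemma Z_integrable: "s > 0 \<Longrightarrow> integrable lborel (\<lambda>y. indicator {a<..<b} y * normal_density 0 s y)"
  using integrable_real_mult_indicator[of "{a<..<b}" lborel "normal_density 0 s"]
  by (simp add: mult.commute)

lemma Z_lower_aux:
  assumes s: "s > 0" and sub: "{c<..<c+s} \<subseteq> {a<..<b}" and c: "c = 0 \<or> c = -s"
  shows "integral\<^sup>L lborel (\<lambda>y. indicator {a<..<b} y * normal_density 0 s y) \<ge> 1/6"
proof -
  define m where "m = exp (-1/2) / (s * sqrt (2*pi))"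
  have dens: "normal_density 0 s y \<ge> m" if "y \<in> {c<..<c+s}" for y
  proof -
    have "\<bar>y\<bar> \<le> s" using that c s by auto
    hence "\<bar>y\<bar>^2 \<le> s^2" by (intro power_mono) auto
    hence "y\<^sup>2 \<le> s\<^sup>2" by simp
    hence "-1/2 \<le> - y\<^sup>2 / (2 * s\<^sup>2)" using s by (simp add: field_simps)
    hence "exp (-1/2) \<le> exp (- y\<^sup>2 / (2 * s\<^sup>2))" by simp
    moreover have "sqrt (2 * pi * s\<^sup>2) = s * sqrt (2*pi)" using s
      by (simp add: real_sqrt_mult mult.commute)
    ultimately show ?thesis unfolding normal_density_def m_def using s
      by (simp add: divide_right_mono)
  qed
  have "integral\<^sup>L lborel (\<lambda>y. indicator {c<..<c+s} y * m) \<le>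
        integral\<^sup>L lborel (\<lambda>y. indicator {a<..<b} y * normal_density 0 s y)"
  proof (rule integral_mono)
    show "integrable lborel (\<lambda>y. indicator {c<..<c+s} y * m)"
      using s by (intro integrable_mult_left integrable_real_indicator) (auto simp: emeasure_lborel_Ioo)
    show "integrable lborel (\<lambda>y. indicator {a<..<b} y * normal_density 0 s y)" by (rule Z_integrable[OF s])
    fix y show "indicator {c<..<c+s} y * m \<le> indicator {a<..<b} y * normal_density 0 s y"
      using dens[of y] sub by (auto simp: indicator_def)
  qed
  moreover have "integral\<^sup>L lborel (\<lambda>y. indicator {c<..<c+s} y * m) = s * m"
    using s by simp
  moreover have "s * m = exp (-1/2) / sqrt (2*pi)" using s unfolding m_def by simp
  moreover have "exp (-1/2) / sqrt (2*pi) \<ge> (1/6::real)"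
  proof -
    have "exp (-1/2::real) \<ge> 1 + (-1/2)" by (rule exp_ge_add_one_self)
    moreover have "sqrt (2*pi) \<le> 3"
    proof -
      have "2*pi \<le> (3::real)^2" using pi_less_4 by simp
      hence "sqrt (2*pi) \<le> sqrt ((3)^2)" by (rule real_sqrt_le_mono)
      thus ?thesis by simp
    qed
    ultimately show ?thesis by (simp add: field_simps)
  qed
  ultimately show ?thesis by linarith
qed

lemma Z_lower:
  assumes s: "s > 0" and W: "W - 1 \<ge> 2 * s" and p: "0 \<le> p" "p \<le> 1"
  shows "integral\<^sup>L lborel (\<lambda>y. indicator (greaterThanLessThan (-(W - 1) * p) ((W - 1) * (1 - p))) y * normal_density 0 s y) \<ge> 1/6"
proof (cases "p \<le> 1/2")
  case True
  have "(W-1) * (1 - p) \<ge> (W-1) * (1/2)" using True W s by (intro mult_left_mono) auto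
  moreover have "s \<le> (W-1)*(1/2)" using W by simp
  ultimately have h1: "s \<le> (W-1) * (1 - p)" by linarith
  have h2: "-(W - 1) * p \<le> 0"
  proof -
    have "0 \<le> (W-1)*p" using p W s by simp
    thus ?thesis by (simp add: algebra_simps)
  qed
  have "{0<..<0+s} \<subseteq> greaterThanLessThan (-(W - 1) * p) ((W - 1) * (1 - p))"
    using h1 h2 by auto
  thus ?thesis using s by (intro Z_lower_aux[where c=0]) auto
next
  case False
  have "(W-1) * p \<ge> (W-1) * (1/2)" using False W s by (intro mult_left_mono) auto
  moreover have "s \<le> (W-1)*(1/2)" using W by simp
  ultimately have "s \<le> (W-1) * p" by linarith
  hence h1: "-(W - 1) * p \<le> -s" by (metis minus_mult_left neg_le_iff_le)
  have h2: "(W - 1) * (1-p) \<ge> 0" using p W s by (simp add: mult_nonneg_nonneg)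
  have "{-s<..<-s+s} \<subseteq> greaterThanLessThan (-(W - 1) * p) ((W - 1) * (1 - p))"
    using h1 h2 by auto
  thus ?thesis using s by (intro Z_lower_aux[where c="-s"]) auto
qed

lemma tnd_integrable:
  assumes s: "s > 0" and Z: "integral\<^sup>L lborel (\<lambda>y. indicator {a<..<b} y * normal_density 0 s y) > 0"
  shows "integrable lborel (trunc_normal_density s a b)"
    and "integral\<^sup>L lborel (trunc_normal_density s a b) = 1"
    and "(\<integral>\<^sup>+x. ennreal (trunc_normal_density s a b x) \<partial>lborel) = 1"
proof -
  show i: "integrable lborel (trunc_normal_density s a b)"
    unfolding trunc_normal_density_def by (intro integrable_divide_zero Z_integrable s)
  show e: "integral\<^sup>L lborel (trunc_normal_density s a b) = 1"
    unfolding trunc_normal_density_def using Z by simp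
  show "(\<integral>\<^sup>+x. ennreal (trunc_normal_density s a b x) \<partial>lborel) = 1"
    by (subst nn_integral_eq_integral[OF i]) (auto simp: e tnd_nonneg)
qed

lemma tnd_abs:
  assumes s: "s > 0" and Z: "integral\<^sup>L lborel (\<lambda>y. indicator {a<..<b} y * normal_density 0 s y) \<ge> 1/6"
  shows "integrable lborel (\<lambda>x. trunc_normal_density s a b x * \<bar>x\<bar>)"
    and "integral\<^sup>L lborel (\<lambda>x. trunc_normal_density s a b x * \<bar>x\<bar>) \<le> 6 * s"
proof -
  define Zv where "Zv = integral\<^sup>L lborel (\<lambda>y. indicator {a<..<b} y * normal_density 0 s y)"
  have Zv: "Zv \<ge> 1/6" using Z Zv_def by simp
  have ib: "integrable lborel (\<lambda>x. 6 * (normal_density 0 s x * \<bar>x\<bar>))"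
    using integrable_normal_moment_abs[OF s, of 0 1] by simp
  have le: "trunc_normal_density s a b x * \<bar>x\<bar> \<le> 6 * (normal_density 0 s x * \<bar>x\<bar>)" for x
  proof -
    have "trunc_normal_density s a b x * \<bar>x\<bar> \<le> (normal_density 0 s x / Zv) * \<bar>x\<bar>"
      unfolding trunc_normal_density_def Zv_def[symmetric]
      using Zv by (intro mult_right_mono divide_right_mono) (auto simp: indicator_def)
    also have "\<dots> \<le> (normal_density 0 s x * 6) * \<bar>x\<bar>"
    proof (intro mult_right_mono)
      have "normal_density 0 s x / Zv = normal_density 0 s x * (1/Zv)" by simp
      also have "\<dots> \<le> normal_density 0 s x * 6"
        using Zv by (intro mult_left_mono) (auto simp: field_simps)
      finally show "normal_density 0 s x / Zv \<le> normal_density 0 s x * 6" .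
    qed auto
    finally show ?thesis by (simp add: mult_ac)
  qed
  show i: "integrable lborel (\<lambda>x. trunc_normal_density s a b x * \<bar>x\<bar>)"
  proof (rule Bochner_Integration.integrable_bound[OF ib])
    show "(\<lambda>x. trunc_normal_density s a b x * \<bar>x\<bar>) \<in> borel_measurable lborel"
      unfolding trunc_normal_density_def by measurable
    show "AE x in lborel. norm (trunc_normal_density s a b x * \<bar>x\<bar>) \<le> norm (6 * (normal_density 0 s x * \<bar>x\<bar>))"
      using le by (auto simp: tnd_nonneg)
  qed
  have "integral\<^sup>L lborel (\<lambda>x. trunc_normal_density s a b x * \<bar>x\<bar>) \<le> integral\<^sup>L lborel (\<lambda>x. 6 * (normal_density 0 s x * \<bar>x\<bar>))"
    by (intro integral_mono i ib le)
  also have "\<dots> = 6 * (s * sqrt (2/pi))"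
    using integral_normal_moment_abs_odd[OF s, of 0 0] by simp
  also have "\<dots> \<le> 6 * (s * 1)"
  proof -
    have "2/pi \<le> 1" using pi_gt3 by simp
    hence "sqrt (2/pi) \<le> 1" by simp
    thus ?thesis using s by simp
  qed
  finally show "integral\<^sup>L lborel (\<lambda>x. trunc_normal_density s a b x * \<bar>x\<bar>) \<le> 6 * s" by simp
qed


definition tndp :: "real \<Rightarrow> real \<Rightarrow> real \<times> real \<Rightarrow> real" where
  "tndp W s x = trunc_normal_density s (-(W - 1) * fst x) ((W - 1) * (1 - fst x)) (snd x)"

lemma ind_Ioo: "indicator {a<..<b} y = (if a < y \<and> y < b then 1 else (0::real))"
  by (auto simp: indicator_def)

lemma tndp_measurable_borel:
  "tndp W s \<in> borel_measurable (borel \<Otimes>\<^sub>M borel)"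
proof -
  have m1: "(\<lambda>(p::real, y::real). (if -(W - 1) * p < y \<and> y < (W - 1) * (1 - p) then 1 else (0::real)) * normal_density 0 s y)
        \<in> borel_measurable (borel \<Otimes>\<^sub>M borel)"
    by measurable
  have m1': "(\<lambda>(p::real, y::real). (if -(W - 1) * p < y \<and> y < (W - 1) * (1 - p) then 1 else (0::real)) * normal_density 0 s y)
        \<in> borel_measurable (borel \<Otimes>\<^sub>M lborel)"
    using m1 by (simp cong: measurable_cong_sets sets_pair_measure_cong)
  have "(\<lambda>p. integral\<^sup>L lborel (\<lambda>y. (if -(W - 1) * p < y \<and> y < (W - 1) * (1 - p) then 1 else (0::real)) * normal_density 0 s y))
        \<in> borel_measurable borel"
    using lborel.borel_measurable_lebesgue_integral[OF m1'] by simp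
  then show ?thesis
    unfolding tndp_def trunc_normal_density_def ind_Ioo by measurable
qed

lemma tndp_measurable:
  assumes "sets N = sets borel" "sets M = sets borel"
  shows "tndp W s \<in> borel_measurable (N \<Otimes>\<^sub>M M)"
proof -
  have "sets (N \<Otimes>\<^sub>M M) = sets (borel \<Otimes>\<^sub>M borel)"
    using assms by (intro sets_pair_measure_cong) auto
  then show ?thesis using tndp_measurable_borel measurable_cong_sets by blast
qed

lemma pair_law_alt: "pair_law \<nu>0 W s = density (\<nu>0 \<Otimes>\<^sub>M lborel) (\<lambda>x. ennreal (tndp W s x))"
  unfolding pair_law_def tndp_def by (simp add: case_prod_beta')

definition good :: "real \<Rightarrow> (real \<times> real) set" where
  "good W = {x. 0 \<le> fst x \<and> fst x \<le> 1 \<and> -(W - 1) * fst x < snd x \<and> snd x < (W - 1) * (1 - fst x)}"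

definition gfun :: "real \<Rightarrow> nat \<Rightarrow> real \<times> real \<Rightarrow> real" where
  "gfun W k x = (if x \<in> good W then weight W k x * (2 * fst x - 1) else 0)"

lemma gfun_measurable_borel: "gfun W k \<in> borel_measurable (borel \<Otimes>\<^sub>M borel)"
  unfolding gfun_def good_def weight_def by measurable

lemma weight_bound: "W > 1 \<Longrightarrow> x \<in> good W \<Longrightarrow> \<bar>weight W k x\<bar> \<le> 2 * W"
proof -
  assume W: "W > 1" and x: "x \<in> good W"
  obtain p e where pe: "x = (p,e)" by (cases x)
  have p: "0 \<le> p" "p \<le> 1" and e: "-(W - 1) * p < e" "e < (W - 1) * (1 - p)"
    using x pe by (auto simp: good_def)
  have pk: "0 \<le> p^k" "p^k \<le> 1" using p by (auto intro: power_le_one)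
  have a: "0 \<le> (W-1) * p^k" "(W-1)*p^k \<le> W - 1" using pk W by (auto intro: mult_left_le)
  have b: "(W-1)*p \<le> W - 1" "0 \<le> (W-1)*p" using p W by (auto intro: mult_left_le)
  have c: "(W - 1) * (1 - p) \<le> W - 1" using p W by (auto intro: mult_left_le)
  have e1: "-((W-1)*p) < e" using e(1) by (simp only: minus_mult_left)
  have u: "1 + (W-1)*p^k + e \<le> 2*W" using a c e(2) by linarith
  have l: "-(2*W) \<le> 1 + (W-1)*p^k + e" using a b e1 W by linarith
  show ?thesis using u l by (simp add: weight_def pe abs_le_iff)
qed

lemma gfun_bound: "W > 1 \<Longrightarrow> \<bar>gfun W k x\<bar> \<le> 2 * W"
proof -
  assume W: "W > 1"
  show ?thesis
  proof (cases "x \<in> good W")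
    case True
    have "\<bar>2 * fst x - 1\<bar> \<le> 1" using True by (auto simp: good_def)
    hence "\<bar>weight W k x * (2 * fst x - 1)\<bar> \<le> 2 * W * 1"
      unfolding abs_mult using weight_bound[OF W True, of k] W by (intro mult_mono) auto
    thus ?thesis using True by (simp add: gfun_def)
  qed (use W in \<open>auto simp: gfun_def\<close>)
qed

definition ck :: "real measure \<Rightarrow> nat \<Rightarrow> real" where
  "ck N k = integral\<^sup>L N (\<lambda>p. if 0 \<le> p \<and> p \<le> 1 then p^k * (2*p - 1) else 0)"

lemma tndp_nonneg: "0 \<le> tndp W s x" unfolding tndp_def by (rule tnd_nonneg)

context
  fixes \<nu>0 :: "real measure" and W s :: real
  assumes nu_prob: "prob_space \<nu>0" and nu_sets: "sets \<nu>0 = sets borel"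
    and nu01: "emeasure \<nu>0 {0..1} = 1"
    and W1: "W > 1" and s0: "s > 0" and Ws: "W - 1 \<ge> 2 * s"
begin

interpretation nu: prob_space \<nu>0 by (rule nu_prob)
lemma meas_nu: "f \<in> borel_measurable borel \<Longrightarrow> f \<in> borel_measurable \<nu>0"
  using measurable_cong_sets[OF nu_sets refl] by blast

interpretation P: pair_sigma_finite \<nu>0 lborel
  by (intro pair_sigma_finite.intro nu.sigma_finite_measure_axioms lborel.sigma_finite_measure_axioms)

lemma AE_nu01: "AE p in \<nu>0. 0 \<le> p \<and> p \<le> 1"
proof -
  have "nu.prob {0..1} = 1" using nu01 by (simp add: measure_def)
  from nu.AE_prob_1[OF this] show ?thesis by auto
qed

lemma Zp:
  assumes "0 \<le> p" "p \<le> 1"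
  shows "integral\<^sup>L lborel (\<lambda>y. indicator {-(W - 1) * p<..<(W - 1) * (1 - p)} y * normal_density 0 s y) \<ge> 1/6"
  using Z_lower[OF s0 Ws assms] by simp

lemma inner1:
  assumes "0 \<le> p" "p \<le> 1"
  shows "(\<integral>\<^sup>+e. ennreal (tndp W s (p,e)) \<partial>lborel) = 1"
  unfolding tndp_def using tnd_integrable(3)[OF s0] Zp[OF assms] by simp

lemma pair_sets: "sets (pair_law \<nu>0 W s) = sets (borel \<Otimes>\<^sub>M borel)"
  unfolding pair_law_alt using nu_sets by (simp cong: sets_pair_measure_cong)

lemma tndp_meas[measurable]: "tndp W s \<in> borel_measurable (\<nu>0 \<Otimes>\<^sub>M lborel)"
  using nu_sets by (intro tndp_measurable) auto

lemma pair_prob: "prob_space (pair_law \<nu>0 W s)"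
proof (rule prob_spaceI)
  have "emeasure (pair_law \<nu>0 W s) (space (pair_law \<nu>0 W s)) =
        (\<integral>\<^sup>+x. ennreal (tndp W s x) \<partial>(\<nu>0 \<Otimes>\<^sub>M lborel))"
    unfolding pair_law_alt using sets.top[of "\<nu>0 \<Otimes>\<^sub>M lborel"]
    by (subst emeasure_density) (auto intro!: nn_integral_cong simp: indicator_def)
  also have "\<dots> = (\<integral>\<^sup>+p. \<integral>\<^sup>+e. ennreal (tndp W s (p,e)) \<partial>lborel \<partial>\<nu>0)"
    by (rule lborel.nn_integral_fst[symmetric]) measurable
  also have "\<dots> = (\<integral>\<^sup>+p. 1 \<partial>\<nu>0)"
    by (intro nn_integral_cong_AE eventually_mono[OF AE_nu01]) (auto simp: inner1)
  also have "\<dots> = 1" by (simp add: nu.emeasure_space_1)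
  finally show "emeasure (pair_law \<nu>0 W s) (space (pair_law \<nu>0 W s)) = 1" .
qed

lemma gfun_meas[measurable]: "gfun W k \<in> borel_measurable (pair_law \<nu>0 W s)"
  using gfun_measurable_borel measurable_cong_sets[OF pair_sets refl] by blast

lemma gfun_meas2[measurable]: "gfun W k \<in> borel_measurable (\<nu>0 \<Otimes>\<^sub>M lborel)"
proof -
  have "sets (\<nu>0 \<Otimes>\<^sub>M lborel) = sets (borel \<Otimes>\<^sub>M borel)"
    using nu_sets by (intro sets_pair_measure_cong) auto
  then show ?thesis using gfun_measurable_borel measurable_cong_sets by blast
qed

lemma AE_good: "AE x in pair_law \<nu>0 W s. x \<in> good W"
proof -
  have "AE x in \<nu>0 \<Otimes>\<^sub>M lborel. 0 < tndp W s x \<longrightarrow> x \<in> good W"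
  proof (rule P.AE_pair_measure)
    show "{x \<in> space (\<nu>0 \<Otimes>\<^sub>M lborel). 0 < tndp W s x \<longrightarrow> x \<in> good W} \<in> sets (\<nu>0 \<Otimes>\<^sub>M lborel)"
      unfolding good_def using nu_sets by measurable
    show "AE p in \<nu>0. AE e in lborel. 0 < tndp W s (p, e) \<longrightarrow> (p, e) \<in> good W"
    proof (intro eventually_mono[OF AE_nu01] AE_I2 impI)
      fix p e assume p: "0 \<le> p \<and> p \<le> 1" and t: "0 < tndp W s (p, e)"
      then show "(p, e) \<in> good W"
        unfolding tndp_def trunc_normal_density_def good_def by (auto simp: indicator_def of_bool_def split: if_splits)
    qed
  qed
  then show ?thesis unfolding pair_law_alt by (subst AE_density) auto
qed

lemma gfun_integrable: "integrable (pair_law \<nu>0 W s) (gfun W k)"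
  by (rule finite_measure.integrable_const_bound[OF prob_space.finite_measure[OF pair_prob], where B="2*W"]) (use gfun_bound[OF W1] in auto)

lemma expect_bound:
  "integral\<^sup>L (pair_law \<nu>0 W s) (gfun W k) \<ge> -1 + (W - 1) * ck \<nu>0 k - 6 * s"
proof -
  define F where "F = (\<lambda>x. tndp W s x * gfun W k x)"
  have Fm[measurable]: "F \<in> borel_measurable (\<nu>0 \<Otimes>\<^sub>M lborel)"
    unfolding F_def by measurable
  have E: "integral\<^sup>L (pair_law \<nu>0 W s) (gfun W k) = integral\<^sup>L (\<nu>0 \<Otimes>\<^sub>M lborel) F"
    unfolding pair_law_alt F_def
    by (subst integral_density) (auto simp: tndp_nonneg)
  have Fi: "integrable (\<nu>0 \<Otimes>\<^sub>M lborel) F"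
  proof -
    have "integrable (density (\<nu>0 \<Otimes>\<^sub>M lborel) (\<lambda>x. ennreal (tndp W s x))) (gfun W k)"
      using gfun_integrable unfolding pair_law_alt .
    then show ?thesis unfolding F_def
      by (subst (asm) integrable_density) (auto simp: tndp_nonneg)
  qed
  define h where "h = (\<lambda>p::real. (if 0 \<le> p \<and> p \<le> 1 then 2*p - 1 else 0) + (W - 1) * (if 0 \<le> p \<and> p \<le> 1 then p^k * (2*p - 1) else 0) - 6 * s)"
  have h1i: "integrable \<nu>0 (\<lambda>p::real. if 0 \<le> p \<and> p \<le> 1 then 2*p - 1 else 0)"
    by (rule nu.integrable_const_bound[where B=1]) (auto intro!: meas_nu)
  have h2i: "integrable \<nu>0 (\<lambda>p::real. if 0 \<le> p \<and> p \<le> 1 then p^k * (2*p - 1) else 0)"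
  proof (rule nu.integrable_const_bound[where B=1])
    show "AE x in \<nu>0. norm (if 0 \<le> x \<and> x \<le> 1 then x ^ k * (2 * x - 1) else 0) \<le> 1"
    proof (intro AE_I2)
      fix x :: real
      show "norm (if 0 \<le> x \<and> x \<le> 1 then x ^ k * (2 * x - 1) else 0) \<le> 1"
      proof (cases "0 \<le> x \<and> x \<le> 1")
        case True
        hence "\<bar>x^k\<bar> \<le> 1" "\<bar>2*x - 1\<bar> \<le> 1" by (auto intro: power_le_one)
        hence "\<bar>x^k\<bar> * \<bar>2*x - 1\<bar> \<le> 1 * 1" by (intro mult_mono) auto
        thus ?thesis using True by (simp add: abs_mult)
      qed auto
    qed
  qed (auto intro!: meas_nu)
  have hi: "integrable \<nu>0 h" unfolding h_def using h1i h2i by auto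
  have inner: "h p \<le> (\<integral>e. F (p, e) \<partial>lborel)" if p: "0 \<le> p \<and> p \<le> 1" for p
  proof -
    define c where "c = (1 + (W - 1) * p^k) * (2*p - 1)"
    define t where "t = trunc_normal_density s (-(W - 1) * p) ((W - 1) * (1 - p))"
    have Z: "integral\<^sup>L lborel (\<lambda>y. indicator {-(W - 1) * p<..<(W - 1) * (1 - p)} y * normal_density 0 s y) > 0"
      using Zp[of p] p by simp
    have ti: "integrable lborel t" and t1: "integral\<^sup>L lborel t = 1"
      unfolding t_def using tnd_integrable[OF s0 Z] by auto
    have tai: "integrable lborel (\<lambda>e. t e * \<bar>e\<bar>)" and ta: "integral\<^sup>L lborel (\<lambda>e. t e * \<bar>e\<bar>) \<le> 6 * s"
      unfolding t_def using tnd_abs[OF s0 Zp[of p]] p by auto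
    have Fp: "F (p, e) = t e * gfun W k (p, e)" for e unfolding F_def tndp_def t_def by simp
    have Fpi: "integrable lborel (\<lambda>e. F (p, e))"
    proof (rule Bochner_Integration.integrable_bound[of _ "\<lambda>e. 2 * W * t e"])
      show "integrable lborel (\<lambda>e. 2 * W * t e)" using ti by auto
      show "(\<lambda>e. F (p, e)) \<in> borel_measurable lborel"
        by (rule measurable_Pair2[OF Fm]) (simp add: sets_eq_imp_space_eq[OF nu_sets])
      show "AE e in lborel. norm (F (p, e)) \<le> norm (2 * W * t e)"
      proof (intro AE_I2)
        fix e
        have "\<bar>t e\<bar> * \<bar>gfun W k (p, e)\<bar> \<le> \<bar>t e\<bar> * (2 * W)"
          by (intro mult_left_mono gfun_bound W1) auto
        thus "norm (F (p, e)) \<le> norm (2 * W * t e)" unfolding Fp using W1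
          by (simp add: abs_mult mult_ac t_def tnd_nonneg)
      qed
    qed
    have pw: "t e * c - t e * \<bar>e\<bar> \<le> F (p, e)" for e
    proof (cases "(p, e) \<in> good W")
      case True
      have "\<bar>e * (2*p - 1)\<bar> \<le> \<bar>e\<bar> * 1" unfolding abs_mult using p by (intro mult_left_mono) auto
      hence "c - \<bar>e\<bar> \<le> weight W k (p, e) * (2 * p - 1)"
        unfolding c_def weight_def by (simp add: algebra_simps)
      hence "t e * (c - \<bar>e\<bar>) \<le> t e * (weight W k (p, e) * (2 * p - 1))"
        by (intro mult_left_mono) (auto simp: t_def tnd_nonneg)
      thus ?thesis unfolding Fp gfun_def using True by (simp add: algebra_simps)
    next
      case False
      hence "t e = 0" using p unfolding t_def trunc_normal_density_def good_def by (auto simp: indicator_def)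
      thus ?thesis unfolding Fp by simp
    qed
    have "(\<integral>e. t e * c - t e * \<bar>e\<bar> \<partial>lborel) \<le> (\<integral>e. F (p, e) \<partial>lborel)"
      by (intro integral_mono Fpi pw Bochner_Integration.integrable_diff tai integrable_mult_left ti)
    moreover have "(\<integral>e. t e * c - t e * \<bar>e\<bar> \<partial>lborel) = c - integral\<^sup>L lborel (\<lambda>e. t e * \<bar>e\<bar>)"
      using ti tai t1 by (subst Bochner_Integration.integral_diff) auto
    moreover have "h p = c - 6 * s" unfolding h_def c_def using p by (simp add: algebra_simps)
    ultimately show ?thesis using ta by linarith
  qed
  have "integral\<^sup>L \<nu>0 h \<le> (\<integral>p. (\<integral>e. F (p, e) \<partial>lborel) \<partial>\<nu>0)"
    by (intro integral_mono_AE hi P.integrable_fst' Fi eventually_mono[OF AE_nu01] inner)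
  also have "\<dots> = integral\<^sup>L (\<nu>0 \<Otimes>\<^sub>M lborel) F" by (rule P.integral_fst'[OF Fi])
  finally have 1: "integral\<^sup>L \<nu>0 h \<le> integral\<^sup>L (pair_law \<nu>0 W s) (gfun W k)" using E by simp
  have 2: "integral\<^sup>L \<nu>0 h = integral\<^sup>L \<nu>0 (\<lambda>p::real. if 0 \<le> p \<and> p \<le> 1 then 2*p - 1 else 0) + (W - 1) * ck \<nu>0 k - 6 * s"
    unfolding h_def ck_def using h1i h2i nu.prob_space by (simp add: nu.emeasure_space_1 measure_def)
  have 3: "integral\<^sup>L \<nu>0 (\<lambda>p::real. if 0 \<le> p \<and> p \<le> 1 then 2*p - 1 else 0) \<ge> integral\<^sup>L \<nu>0 (\<lambda>p. -1::real)"
    by (intro integral_mono h1i) auto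
  have 4: "integral\<^sup>L \<nu>0 (\<lambda>p. -1::real) = -1" using nu.prob_space by simp
  show ?thesis using 1 2 3 4 by linarith
qed

end


lemma ex_pos_c:
  assumes P: "prob_space N" and S: "sets N = sets borel" and pos: "emeasure N {1/2<..1::real} > 0"
  shows "\<exists>c::real. c > 1/2 \<and> c \<le> 1 \<and> emeasure N {c<..1} > 0"
proof (rule ccontr)
  assume H: "\<not> ?thesis"
  define A where "A = (\<lambda>j::nat. {1/2 + 1/real (j+3) <.. 1::real})"
  have c: "1/2 + 1/real (j+3) > 1/2" "1/2 + 1/real (j+3) \<le> (1::real)" for j
    by (auto simp: field_simps)
  have "emeasure N (A j) = 0" for j using H c[of j] unfolding A_def by auto
  hence "emeasure N (\<Union>j. A j) = 0"
    by (intro emeasure_UN_eq_0) (auto simp: A_def S)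
  moreover have "{1/2<..1::real} \<subseteq> (\<Union>j. A j)"
  proof
    fix x :: real assume x: "x \<in> {1/2<..1}"
    then obtain n :: nat where n: "inverse (real (Suc n)) < x - 1/2"
      using reals_Archimedean[of "x - 1/2"] by auto
    have "1/real (n+3) \<le> inverse (real (Suc n))" by (simp add: field_simps)
    with n x show "x \<in> (\<Union>j. A j)" unfolding A_def by (auto intro!: exI[of _ n])
  qed
  moreover have "(\<Union>j. A j) \<in> sets N" by (auto simp: A_def S)
  ultimately have "emeasure N {1/2<..1::real} \<le> 0"
    by (metis emeasure_mono)
  with pos show False by simp
qed

lemma ck_lower:
  assumes P: "prob_space N" and S: "sets N = sets borel" and c: "c > 1/2" "c \<le> (1::real)"
  shows "ck N k \<ge> c^k * (2*c - 1) * measure N {c<..1} - (1/2)^k"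
proof -
  interpret prob_space N by (rule P)
  have mN: "f \<in> borel_measurable borel \<Longrightarrow> f \<in> borel_measurable N" for f :: "real \<Rightarrow> real"
    using measurable_cong_sets[OF S refl] by blast
  define f where "f = (\<lambda>p::real. if 0 \<le> p \<and> p \<le> 1 then p^k * (2*p - 1) else 0)"
  define g where "g = (\<lambda>p::real. c^k * (2*c - 1) * indicator {c<..1} p - (1/2::real)^k)"
  have fi: "integrable N f"
  proof (rule integrable_const_bound[where B=1])
    show "AE x in N. norm (f x) \<le> 1"
    proof (intro AE_I2)
      fix x :: real
      show "norm (f x) \<le> 1"
      proof (cases "0 \<le> x \<and> x \<le> 1")
        case True
        hence "\<bar>x^k\<bar> \<le> 1" "\<bar>2*x - 1\<bar> \<le> 1" by (auto intro: power_le_one)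
        hence "\<bar>x^k\<bar> * \<bar>2*x - 1\<bar> \<le> 1 * 1" by (intro mult_mono) auto
        thus ?thesis using True by (simp add: abs_mult f_def)
      qed (auto simp: f_def)
    qed
  qed (auto simp: f_def intro!: mN)
  have gi: "integrable N g" unfolding g_def
    by (intro Bochner_Integration.integrable_diff integrable_mult_right integrable_real_indicator) (auto simp: S emeasure_eq_measure)
  have le: "g p \<le> f p" for p
  proof -
    have h0: "(0::real) \<le> (1/2)^k" by simp
    consider "c < p \<and> p \<le> 1" | "1/2 \<le> p \<and> p \<le> c" | "0 \<le> p \<and> p < 1/2" | "\<not> (0 \<le> p \<and> p \<le> 1)"
      using c by linarith
    then show ?thesis
    proof cases
      case 1
      have "c^k \<le> p^k" using 1 c by (intro power_mono) auto
      moreover have "2*c - 1 \<le> 2*p - 1" using 1 by simp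
      ultimately have m: "c^k * (2*c - 1) \<le> p^k * (2*p - 1)" using c by (intro mult_mono) auto
      have "g p = c^k * (2*c - 1) - (1/2)^k" using 1 by (simp add: g_def)
      moreover have "f p = p^k * (2*p - 1)" using 1 c by (simp add: f_def)
      ultimately show ?thesis using m h0 by linarith
    next
      case 2
      hence m: "0 \<le> p^k * (2*p - 1)" by simp
      have "g p = -((1/2)^k)" using 2 by (simp add: g_def)
      moreover have "f p = p^k * (2*p - 1)" using 2 c by (simp add: f_def)
      ultimately show ?thesis using m h0 by linarith
    next
      case 3
      hence "p^k \<le> (1/2)^k" by (intro power_mono) auto
      moreover have "p^k * (2*p - 1) \<ge> p^k * (-1)" using 3 by (intro mult_left_mono) auto
      moreover have "g p = -((1/2)^k)" using 3 c by (simp add: g_def)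
      moreover have "f p = p^k * (2*p - 1)" using 3 by (simp add: f_def)
      ultimately show ?thesis by linarith
    next
      case 4
      moreover have "g p = -((1/2)^k)" using 4 c by (auto simp: g_def)
      moreover have "f p = 0" using 4 unfolding f_def by presburger
      ultimately show ?thesis using h0 by linarith
    qed
  qed
  have "integral\<^sup>L N g \<le> integral\<^sup>L N f" by (intro integral_mono gi fi le)
  moreover have "integral\<^sup>L N g = c^k * (2*c - 1) * measure N {c<..1} - (1/2)^k"
  proof -
    have i1: "integrable N (\<lambda>p. c^k * (2*c - 1) * indicator {c<..1} p :: real)"
      by (intro integrable_mult_right integrable_real_indicator) (auto simp: S emeasure_eq_measure)
    have "integral\<^sup>L N g = integral\<^sup>L N (\<lambda>p. c^k * (2*c - 1) * indicator {c<..1} p :: real) - integral\<^sup>L N (\<lambda>p. (1/2::real)^k)"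
      unfolding g_def by (rule Bochner_Integration.integral_diff[OF i1]) auto
    also have "integral\<^sup>L N (\<lambda>p. c^k * (2*c - 1) * indicator {c<..1} p :: real) = c^k * (2*c - 1) * measure N {c<..1}"
      by (simp add: sets_eq_imp_space_eq[OF S])
    also have "integral\<^sup>L N (\<lambda>p. (1/2::real)^k) = (1/2)^k" using prob_space by simp
    finally show ?thesis .
  qed
  ultimately show ?thesis unfolding ck_def f_def by simp
qed

lemma ck_pos:
  assumes P: "prob_space N" and S: "sets N = sets borel" and pos: "emeasure N {1/2<..1::real} > 0"
  shows "\<exists>k::nat. k \<ge> 1 \<and> ck N k > 0"
proof -
  interpret prob_space N by (rule P)
  obtain c where c: "c > 1/2" "c \<le> 1" "emeasure N {c<..1} > 0" using ex_pos_c[OF P S pos] by blast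
  define d where "d = measure N {c<..1}"
  have d: "d > 0" using c(3) unfolding d_def by (simp add: emeasure_eq_measure)
  have c2: "2*c > 1" using c by simp
  obtain n where n: "1 / ((2*c - 1) * d) < (2*c)^n" using real_arch_pow[OF c2] by blast
  define k where "k = Suc n"
  have "(2*c)^n \<le> (2*c)^k" unfolding k_def using c2 by (intro power_increasing) auto
  with n have "1 / ((2*c - 1) * d) < (2*c)^k" by linarith
  hence "1 < (2*c)^k * ((2*c - 1) * d)" using c2 d by (simp add: field_simps)
  hence "1 < 2^k * (c^k * (2*c - 1) * d)" by (simp add: power_mult_distrib mult_ac)
  hence "(1/2)^k < c^k * (2*c - 1) * d" by (simp add: field_simps)
  moreover have "ck N k \<ge> c^k * (2*c - 1) * d - (1/2)^k" unfolding d_def using ck_lower[OF P S c(1,2)] .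
  ultimately show ?thesis unfolding k_def by (intro exI[of _ "Suc n"]) auto
qed


lemma wmp_lower:
  assumes W: "W > 1" and good: "\<And>i. i < n \<Longrightarrow> s i \<in> good W" and n: "n \<ge> 1"
    and M: "(\<Sum>i<n. gfun W k (s i)) \<ge> 0"
  shows "weighted_majority_prob W k s n \<ge> 1 - exp (-2 * (\<Sum>i<n. gfun W k (s i))\<^sup>2 / (real n * (4*W)\<^sup>2))"
proof -
  define Q where "Q = Pi_pmf {..<n} False (\<lambda>i. bernoulli_pmf (fst (s i)))"
  define w where "w = (\<lambda>i. weight W k (s i))"
  define X where "X = (\<lambda>i (x::nat \<Rightarrow> bool). w i * (if x i then 1 else -1::real))"
  have wb: "\<bar>w i\<bar> \<le> 2 * W" if "i < n" for i unfolding w_def using weight_bound[OF W good[OF that]] .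
  have p01: "0 \<le> fst (s i)" "fst (s i) \<le> 1" if "i < n" for i using good[OF that] by (auto simp: good_def)
  have EX: "measure_pmf.expectation Q (X i) = gfun W k (s i)" if i: "i < n" for i
  proof -
    have "measure_pmf.expectation Q (X i) = measure_pmf.expectation (map_pmf (\<lambda>f. f i) Q) (\<lambda>b. w i * (if b then 1 else -1::real))"
      unfolding X_def by simp
    also have "map_pmf (\<lambda>f. f i) Q = bernoulli_pmf (fst (s i))"
      unfolding Q_def using i by (subst Pi_pmf_component) auto
    also have "measure_pmf.expectation (bernoulli_pmf (fst (s i))) (\<lambda>b. w i * (if b then 1 else -1::real))
               = w i * (2 * fst (s i) - 1)"
      using p01[OF i] by (simp add: algebra_simps)
    finally show ?thesis using good[OF i] unfolding gfun_def w_def by simp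
  qed
  interpret H: Hoeffding_ineq "measure_pmf Q" "{..<n}" X "\<lambda>_. -2*W" "\<lambda>_. 2*W" "\<Sum>i<n. measure_pmf.expectation Q (X i)"
  proof unfold_locales
    show "finite {..<n}" by simp
    show "prob_space.indep_vars (measure_pmf Q) (\<lambda>_. borel) X {..<n}"
      unfolding X_def Q_def
      by (rule prob_space.indep_vars_compose2[OF measure_pmf.prob_space_axioms, where X="\<lambda>i f. f i", OF indep_vars_Pi_pmf[unfolded Q_def[symmetric]], unfolded Q_def]) auto
    fix i assume i: "i \<in> {..<n}"
    show "AE x in measure_pmf Q. X i x \<in> {-2*W..2*W}"
      using wb[of i] i by (intro AE_I2) (auto simp: X_def abs_le_iff)
  qed simp
  define M where "M = (\<Sum>i<n. gfun W k (s i))"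
  have Meq: "(\<Sum>i<n. measure_pmf.expectation Q (X i)) = M" unfolding M_def by (intro sum.cong) (auto simp: EX)
  have pos: "(\<Sum>i\<in>{..<n}. (2*W - (-2*W))\<^sup>2) > 0" using n W by (simp add: sum_pos)
  have sq: "(\<Sum>i\<in>{..<n}. (2*W - (-2*W))\<^sup>2) = real n * (4*W)\<^sup>2" by simp
  have "measure_pmf.prob Q {x\<in>space (measure_pmf Q). (\<Sum>i\<in>{..<n}. X i x) \<le> (\<Sum>i<n. measure_pmf.expectation Q (X i)) - M}
          \<le> exp (-2 * M\<^sup>2 / (\<Sum>i\<in>{..<n}. (2*W - (-2*W))\<^sup>2))"
    using M unfolding M_def[symmetric] by (intro H.Hoeffding_ineq_le pos) auto
  hence le: "measure_pmf.prob Q {x. (\<Sum>i<n. X i x) \<le> 0} \<le> exp (-2 * M\<^sup>2 / (real n * (4*W)\<^sup>2))"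
    unfolding Meq sq by simp
  have "weighted_majority_prob W k s n = measure_pmf.prob Q {x. (\<Sum>i<n. X i x) > 0}"
    unfolding weighted_majority_prob_def Q_def[symmetric] X_def w_def by simp
  also have "{x. (\<Sum>i<n. X i x) > 0} = space (measure_pmf Q) - {x. (\<Sum>i<n. X i x) \<le> 0}" by auto
  also have "measure_pmf.prob Q \<dots> = 1 - measure_pmf.prob Q {x. (\<Sum>i<n. X i x) \<le> 0}" by (rule measure_pmf.prob_compl) simp
  finally show ?thesis using le unfolding M_def by linarith
qed

lemma wmp_le1: "weighted_majority_prob W k s n \<le> 1"
  unfolding weighted_majority_prob_def by (rule measure_pmf.prob_le_1)

lemma in_CJP:
  assumes W: "W > 1" and mu: "mu > 0" and good: "\<And>i. s i \<in> good W"
    and ev: "eventually (\<lambda>n. (\<Sum>i<Suc n. gfun W k (s i)) > real (Suc n) * mu / 2) sequentially"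
  shows "s \<in> CJP_weighted W k"
proof -
  define c where "c = mu\<^sup>2 / (32 * W\<^sup>2)"
  have c: "c > 0" unfolding c_def using mu W by simp
  have low: "weighted_majority_prob W k s (Suc n) \<ge> 1 - exp (-c) ^ Suc n"
    if H: "(\<Sum>i<Suc n. gfun W k (s i)) > real (Suc n) * mu / 2" for n
  proof -
    define M where "M = (\<Sum>i<Suc n. gfun W k (s i))"
    have "0 \<le> real (Suc n) * mu / 2" using mu by simp
    hence M0: "M \<ge> 0" using H unfolding M_def by linarith
    have w: "weighted_majority_prob W k s (Suc n) \<ge> 1 - exp (-2 * M\<^sup>2 / (real (Suc n) * (4*W)\<^sup>2))"
      using wmp_lower[OF W good, of "Suc n" k] M0 unfolding M_def by simp
    have "(real (Suc n) * mu / 2)\<^sup>2 \<le> M\<^sup>2"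
      using H mu unfolding M_def by (intro power_mono) auto
    hence "-2 * M\<^sup>2 / (real (Suc n) * (4*W)\<^sup>2) \<le> -2 * (real (Suc n) * mu / 2)\<^sup>2 / (real (Suc n) * (4*W)\<^sup>2)"
      using W by (intro divide_right_mono) auto
    also have "\<dots> = real (Suc n) * (-c)"
    proof -
      have N: "real (Suc n) \<noteq> 0" and W0: "W \<noteq> 0" using W by auto
      show ?thesis unfolding c_def using N W0
        by (simp add: divide_simps power2_eq_square)
    qed
    finally have "exp (-2 * M\<^sup>2 / (real (Suc n) * (4*W)\<^sup>2)) \<le> exp (real (Suc n) * (-c))" by simp
    also have "\<dots> = exp (-c) ^ Suc n" by (rule exp_of_nat_mult)
    finally show ?thesis using w by linarith
  qed
  have "(\<lambda>n. weighted_majority_prob W k s (Suc n)) \<longlonglongrightarrow> 1"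
  proof (rule tendsto_sandwich[where f="\<lambda>n. 1 - exp (-c) ^ Suc n" and h="\<lambda>n. 1"])
    show "eventually (\<lambda>n. 1 - exp (-c) ^ Suc n \<le> weighted_majority_prob W k s (Suc n)) sequentially"
      using ev by (rule eventually_mono) (rule low)
    show "eventually (\<lambda>n. weighted_majority_prob W k s (Suc n) \<le> 1) sequentially"
      by (simp add: wmp_le1)
    have "(\<lambda>n. exp (-c) ^ Suc n) \<longlonglongrightarrow> 0"
      using c by (intro LIMSEQ_Suc[OF LIMSEQ_power_zero]) simp
    from tendsto_diff[OF tendsto_const[of 1] this]
    show "(\<lambda>n. 1 - exp (-c) ^ Suc n) \<longlonglongrightarrow> 1" by simp
  qed simp
  hence "(\<lambda>n. weighted_majority_prob W k s n) \<longlonglongrightarrow> 1" by (rule LIMSEQ_imp_Suc)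
  thus ?thesis unfolding CJP_weighted_def by simp
qed


lemma pmf_bern: "pmf (bernoulli_pmf p) b = (if b then min 1 (max 0 p) else 1 - min 1 (max 0 p))"
  by (simp add: bernoulli_pmf.rep_eq)

definition Sdf :: "nat \<Rightarrow> (nat \<Rightarrow> bool) set" where
  "Sdf n = PiE_dflt {..<n} False (\<lambda>_. UNIV)"

lemma finite_Sdf: "finite (Sdf n)" unfolding Sdf_def by (intro finite_PiE_dflt) auto

lemma wmp_sum:
  "weighted_majority_prob W k s n =
     (\<Sum>x\<in>Sdf n. (if (\<Sum>i<n. weight W k (s i) * (if x i then 1 else -1)) > 0 then 1 else 0) *
        (\<Prod>i<n. pmf (bernoulli_pmf (fst (s i))) (x i)))"
proof -
  define Q where "Q = Pi_pmf {..<n} False (\<lambda>i. bernoulli_pmf (fst (s i)))"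
  define A where "A = {x. (\<Sum>i<n. weight W k (s i) * (if x i then 1 else -1)) > (0::real)}"
  have sub: "set_pmf Q \<subseteq> Sdf n"
    using set_Pi_pmf_subset[of "{..<n}" False "\<lambda>i. bernoulli_pmf (fst (s i))"]
    unfolding Q_def Sdf_def PiE_dflt_def by auto
  have "weighted_majority_prob W k s n = measure (measure_pmf Q) A"
    unfolding weighted_majority_prob_def Q_def A_def ..
  also have "\<dots> = measure (measure_pmf Q) (A \<inter> set_pmf Q)" by (rule measure_Int_set_pmf[symmetric])
  also have "A \<inter> set_pmf Q = (A \<inter> Sdf n) \<inter> set_pmf Q" using sub by auto
  also have "measure (measure_pmf Q) \<dots> = measure (measure_pmf Q) (A \<inter> Sdf n)" by (rule measure_Int_set_pmf)
  also have "\<dots> = sum (pmf Q) (A \<inter> Sdf n)" by (rule measure_measure_pmf_finite) (simp add: finite_Sdf)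
  also have "\<dots> = (\<Sum>x\<in>Sdf n. (if x \<in> A then 1 else 0) * pmf Q x)"
    unfolding Int_commute[of A] sum.inter_restrict[OF finite_Sdf] by (intro sum.cong) auto
  also have "\<dots> = (\<Sum>x\<in>Sdf n. (if (\<Sum>i<n. weight W k (s i) * (if x i then 1 else -1)) > 0 then 1 else 0) *
        (\<Prod>i<n. pmf (bernoulli_pmf (fst (s i))) (x i)))"
  proof (intro sum.cong refl)
    fix x assume x: "x \<in> Sdf n"
    have "pmf Q x = (\<Prod>i<n. pmf (bernoulli_pmf (fst (s i))) (x i))"
      using x unfolding Q_def Sdf_def PiE_dflt_def by (subst pmf_Pi) auto
    thus "(if x \<in> A then 1 else 0) * pmf Q x = (if (\<Sum>i<n. weight W k (s i) * (if x i then 1 else -1)) > 0 then 1 else 0) *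
        (\<Prod>i<n. pmf (bernoulli_pmf (fst (s i))) (x i))" unfolding A_def by simp
  qed
  finally show ?thesis .
qed

abbreviation PB :: "(nat \<Rightarrow> real \<times> real) measure" where
  "PB \<equiv> PiM UNIV (\<lambda>_. borel \<Otimes>\<^sub>M borel)"

lemma wmp_measurable[measurable]: "(\<lambda>s. weighted_majority_prob W k s n) \<in> borel_measurable PB"
  unfolding wmp_sum pmf_bern weight_def by measurable

lemma LIMSEQ_iff_lim_inf_sup:
  "(X \<longlonglongrightarrow> (L::real)) \<longleftrightarrow> (liminf (\<lambda>n. ereal (X n)) = ereal L \<and> limsup (\<lambda>n. ereal (X n)) = ereal L)"
  using tendsto_iff_Liminf_eq_Limsup[of sequentially "\<lambda>n. ereal (X n)" "ereal L"] by simp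

lemma CJP_sets: "CJP_weighted W k \<in> sets PB"
proof -
  have "{s \<in> space PB. liminf (\<lambda>n. ereal (weighted_majority_prob W k s n)) = ereal 1 \<and>
                       limsup (\<lambda>n. ereal (weighted_majority_prob W k s n)) = ereal 1} \<in> sets PB"
    by measurable
  moreover have "space PB = UNIV" by (auto simp: space_PiM space_pair_measure)
  ultimately show ?thesis unfolding CJP_weighted_def LIMSEQ_iff_lim_inf_sup by simp
qed


context
  fixes \<nu>0 :: "real measure" and W s m :: real and k :: nat
  assumes nu_prob: "prob_space \<nu>0" and nu_sets: "sets \<nu>0 = sets borel"
    and nu01: "emeasure \<nu>0 {0..1} = 1"
    and W1: "W > 1" and s0: "s > 0" and Ws: "W - 1 \<ge> 2 * s"
    and m_def: "m = integral\<^sup>L (pair_law \<nu>0 W s) (gfun W k)" and m_pos: "m > 0"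
begin

abbreviation "PL \<equiv> pair_law \<nu>0 W s"
abbreviation "MU \<equiv> mu0 \<nu>0 W s"

lemma PL_prob: "prob_space PL" by (rule pair_prob[OF nu_prob nu_sets nu01 W1 s0 Ws])
lemma PL_sets: "sets PL = sets (borel \<Otimes>\<^sub>M borel)" by (rule pair_sets[OF nu_prob nu_sets nu01 W1 s0 Ws])
lemma gfun_PL[measurable]: "gfun W k \<in> borel_measurable PL"
  by (rule gfun_meas[OF nu_prob nu_sets nu01 W1 s0 Ws])

interpretation PP: product_prob_space "\<lambda>_. PL" UNIV
  by (intro product_prob_spaceI PL_prob)

lemma MU_eq: "MU = PiM UNIV (\<lambda>_. PL)" unfolding mu0_def ..

interpretation MU: prob_space MU unfolding MU_eq by (intro prob_space_PiM PL_prob)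

lemma MU_sets: "sets MU = sets PB"
  unfolding MU_eq using PL_sets by (intro sets_PiM_cong) auto

lemma comp_distr: "distr MU PL (\<lambda>x. x i) = PL"
  unfolding MU_eq by (rule PP.PiM_component) simp

lemma proj_meas: "(\<lambda>x. x i) \<in> measurable MU PL"
proof -
  have "(\<lambda>x. x i) \<in> measurable (PiM UNIV (\<lambda>_. PL)) PL" by (rule measurable_component_singleton) simp
  thus ?thesis by (simp add: MU_eq)
qed

lemma projg_meas: "(\<lambda>x. gfun W k (x i)) \<in> borel_measurable MU"
  by (rule measurable_compose[OF proj_meas gfun_PL])

lemma indep_comp:
  assumes J: "finite J" "J \<noteq> {}"
  shows "MU.indep_vars (\<lambda>_. PL) (\<lambda>i x. x i) J"
proof (subst MU.indep_vars_iff_distr_eq_PiM'[OF J(2)])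
  show "(\<lambda>x. x i) \<in> measurable MU PL" for i by (rule proj_meas)
  have "distr MU (Pi\<^sub>M J (\<lambda>_. PL)) (\<lambda>x. restrict x J) = PiM J (\<lambda>_. PL)"
    unfolding MU_eq by (rule PP.distr_PiM_restrict_finite) (use J in auto)
  moreover have "(\<lambda>x. \<lambda>i\<in>J. x i) = (\<lambda>x. restrict x J)" by (simp add: restrict_def)
  moreover have "Pi\<^sub>M J (\<lambda>i. distr MU PL (\<lambda>x. x i)) = PiM J (\<lambda>_. PL)"
    by (simp add: comp_distr)
  ultimately show "distr MU (Pi\<^sub>M J (\<lambda>_. PL)) (\<lambda>x. \<lambda>i\<in>J. x i) = Pi\<^sub>M J (\<lambda>i. distr MU PL (\<lambda>x. x i))"
    by simp
qed

lemma distr_g: "distr MU borel (\<lambda>x. gfun W k (x i)) = distr PL borel (gfun W k)"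
proof -
  have "distr PL borel (gfun W k) = distr (distr MU PL (\<lambda>x. x i)) borel (gfun W k)" by (simp add: comp_distr)
  also have "\<dots> = distr MU borel (gfun W k \<circ> (\<lambda>x. x i))"
    by (rule distr_distr) (auto simp: MU_eq)
  finally show ?thesis by (simp add: comp_def)
qed

lemma expect_g: "MU.expectation (\<lambda>x. gfun W k (x i)) = m"
proof -
  have "MU.expectation (\<lambda>x. gfun W k (x i)) = integral\<^sup>L (distr MU PL (\<lambda>x. x i)) (gfun W k)"
    by (rule integral_distr[symmetric]) (auto simp: MU_eq)
  thus ?thesis by (simp add: comp_distr m_def)
qed

lemma hoeff_outer:
  "MU.prob {x \<in> space MU. (\<Sum>i<Suc n. gfun W k (x i)) \<le> real (Suc n) * m / 2}
     \<le> exp (-(m\<^sup>2 / (32 * W\<^sup>2))) ^ Suc n"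
proof -
  interpret H: Hoeffding_ineq_iid MU "{..<Suc n}" "\<lambda>i x. gfun W k (x i)" "\<lambda>x. gfun W k (x 0)" "-2*W" "2*W"
    "MU.expectation (\<lambda>x. gfun W k (x 0))"
  proof unfold_locales
    show "finite {..<Suc n}" by simp
    show "MU.indep_vars (\<lambda>_. borel) (\<lambda>i x. gfun W k (x i)) {..<Suc n}"
      by (rule MU.indep_vars_compose2[OF indep_comp]) auto
    show "distr MU borel (\<lambda>x. gfun W k (x i)) = distr MU borel (\<lambda>x. gfun W k (x 0))" for i
      by (simp add: distr_g)
    show "(\<lambda>x. gfun W k (x 0)) \<in> borel_measurable MU" by (rule projg_meas)
    show "AE x in MU. gfun W k (x 0) \<in> {-2*W..2*W}"
    proof (intro AE_I2)
      fix x :: "nat \<Rightarrow> real \<times> real"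
      have "\<bar>gfun W k (x 0)\<bar> \<le> 2 * W" by (rule gfun_bound[OF W1])
      thus "gfun W k (x 0) \<in> {-2*W..2*W}" by (simp add: abs_le_iff)
    qed
  qed simp
  have eps: "real (Suc n) * m / 2 \<ge> 0" using m_pos by simp
  have "MU.prob {x \<in> space MU. (\<Sum>i\<in>{..<Suc n}. gfun W k (x i)) \<le> real (card {..<Suc n}) * MU.expectation (\<lambda>x. gfun W k (x 0)) - real (Suc n) * m / 2}
        \<le> exp (- 2 * (real (Suc n) * m / 2)\<^sup>2 / (real (card {..<Suc n}) * (2*W - -2*W)\<^sup>2))"
    using W1 by (intro H.Hoeffding_ineq_le eps) auto
  also have "- 2 * (real (Suc n) * m / 2)\<^sup>2 / (real (card {..<Suc n}) * (2*W - -2*W)\<^sup>2) = real (Suc n) * (-(m\<^sup>2 / (32 * W\<^sup>2)))"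
  proof -
    have N: "real (Suc n) \<noteq> 0" and W0: "W \<noteq> 0" using W1 by auto
    show ?thesis using N W0 by (simp add: divide_simps power2_eq_square)
  qed
  also have "exp \<dots> = exp (-(m\<^sup>2 / (32 * W\<^sup>2))) ^ Suc n" by (rule exp_of_nat_mult)
  finally have X: "MU.prob {x \<in> space MU. (\<Sum>i\<in>{..<Suc n}. gfun W k (x i)) \<le> real (card {..<Suc n}) * MU.expectation (\<lambda>x. gfun W k (x 0)) - real (Suc n) * m / 2}
      \<le> exp (-(m\<^sup>2 / (32 * W\<^sup>2))) ^ Suc n" .
  have e: "real (card {..<Suc n}) * MU.expectation (\<lambda>x. gfun W k (x 0)) - real (Suc n) * m / 2 = real (Suc n) * m / 2"
    unfolding expect_g card_lessThan by simp
  show ?thesis using X unfolding e .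
qed

lemma AE_ev: "AE x in MU. eventually (\<lambda>n. (\<Sum>i<Suc n. gfun W k (x i)) > real (Suc n) * m / 2) sequentially"
proof -
  define A where "A = (\<lambda>n. {x \<in> space MU. (\<Sum>i<Suc n. gfun W k (x i)) \<le> real (Suc n) * m / 2})"
  define q where "q = exp (-(m\<^sup>2 / (32 * W\<^sup>2)))"
  have q: "0 < q" "q < 1" unfolding q_def using m_pos W1 by auto
  have Am[measurable]: "A n \<in> sets MU" for n unfolding A_def MU_eq by measurable
  have "summable (\<lambda>n. measure MU (A n))"
  proof (rule summable_comparison_test[where g="\<lambda>n. q * q^n"])
    show "\<exists>N. \<forall>n\<ge>N. norm (measure MU (A n)) \<le> q * q ^ n"
      using hoeff_outer unfolding A_def q_def by auto
    show "summable (\<lambda>n. q * q^n)" using q by (intro summable_mult summable_geometric) auto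
  qed
  from borel_cantelli_AE1[OF Am _ this]
  have "AE x in MU. eventually (\<lambda>n. x \<in> space MU - A n) sequentially"
    by (simp add: MU.emeasure_eq_measure)
  thus ?thesis
    by (rule eventually_mono) (auto elim!: eventually_mono simp: A_def)
qed

lemma AE_good_all: "AE x in MU. \<forall>i. x i \<in> good W"
proof (subst AE_all_countable, intro allI)
  fix i
  show "AE x in MU. x i \<in> good W"
    unfolding MU_eq
    by (rule AE_PiM_component[where M="\<lambda>_. PL"]) (auto intro: PL_prob AE_good[OF nu_prob nu_sets nu01 W1 s0 Ws])
qed

lemma AE_CJP: "AE x in MU. x \<in> CJP_weighted W k"
  using AE_ev AE_good_all
  by eventually_elim (rule in_CJP[OF W1 m_pos], auto)

end

lemma main_step:
  assumes nu: "prob_space \<nu>0" "sets \<nu>0 = sets borel" "emeasure \<nu>0 {0..1} = 1"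
    and c: "c > 0" and c_def: "c = ck \<nu>0 k"
    and W1: "W > 1" and s0: "\<sigma> > 0" and HW: "W \<ge> 1 + 4/c" and HR: "(W - 1) / \<sigma> \<ge> max 2 (24/c)"
    and Hp: "prob_space \<mu>" and Hs: "sets \<mu> = sets (mu0 \<nu>0 W \<sigma>)"
    and Ha: "absolutely_continuous (mu0 \<nu>0 W \<sigma>) \<mu>"
  shows "emeasure \<mu> (CJP_weighted W k) = 1"
proof -
    have r2: "(W - 1) / \<sigma> \<ge> 2" and r24: "(W - 1) / \<sigma> \<ge> 24 / c" using HR by auto
    have Ws: "W - 1 \<ge> 2 * \<sigma>" using r2 s0 by (simp add: field_simps)
    have "W - 1 \<ge> 24 / c * \<sigma>" using r24 s0 by (simp add: field_simps)
    hence a1: "(W - 1) * c \<ge> 24 * \<sigma>" using c by (simp add: field_simps)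
    have "W - 1 \<ge> 4 / c" using HW by simp
    hence a2: "(W - 1) * c \<ge> 4" using c by (simp add: field_simps)
    define m where "m = integral\<^sup>L (pair_law \<nu>0 W \<sigma>) (gfun W k)"
    have "m \<ge> -1 + (W - 1) * c - 6 * \<sigma>"
      unfolding m_def c_def by (rule expect_bound[OF nu W1 s0 Ws])
    hence m_pos: "m > 0" using a1 a2 by linarith
    have AE1: "AE x in mu0 \<nu>0 W \<sigma>. x \<in> CJP_weighted W k"
      by (rule AE_CJP[OF nu W1 s0 Ws m_def m_pos])
    have AE2: "AE x in \<mu>. x \<in> CJP_weighted W k"
      using Hs Ha AE1 by (intro absolutely_continuous_AE[of \<mu> "mu0 \<nu>0 W \<sigma>"]) auto
    have sets_eq: "sets \<mu> = sets PB"
      using Hs MU_sets[OF nu W1 s0 Ws m_def m_pos] by simp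
    have ev: "CJP_weighted W k \<in> sets \<mu>" using CJP_sets sets_eq by simp
    have "measure \<mu> (CJP_weighted W k) = 1" using prob_space.AE_in_set_eq_1[OF Hp ev] AE2 by simp
    thus "emeasure \<mu> (CJP_weighted W k) = 1" by (simp add: finite_measure.emeasure_eq_measure[OF prob_space.finite_measure[OF Hp]])
qed

theorem theorem3:
  fixes \<nu>0 :: "real measure"
  assumes "prob_space \<nu>0"
    and "sets \<nu>0 = sets borel"
    and "emeasure \<nu>0 {0..1} = 1"
    and "emeasure \<nu>0 {1/2<..1} > 0"
  shows "\<exists>k::nat. k \<ge> 1 \<and> (\<exists>W0 R0::real. \<forall>W \<sigma>::real.
           W > 1 \<and> \<sigma> > 0 \<and> W \<ge> W0 \<and> (W - 1) / \<sigma> \<ge> R0 \<longrightarrow>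
           (\<forall>\<mu> :: (nat \<Rightarrow> real \<times> real) measure.
              prob_space \<mu> \<and> sets \<mu> = sets (mu0 \<nu>0 W \<sigma>) \<and>
              absolutely_continuous (mu0 \<nu>0 W \<sigma>) \<mu> \<longrightarrow>
              emeasure \<mu> (CJP_weighted W k) = 1))"
proof -
  obtain k where k1: "k \<ge> 1" and ckp: "ck \<nu>0 k > 0" using ck_pos[OF assms(1,2,4)] by blast
  define c where "c = ck \<nu>0 k"
  have c: "c > 0" using ckp c_def by simp
  have "\<forall>W \<sigma>::real.
           W > 1 \<and> \<sigma> > 0 \<and> W \<ge> 1 + 4/c \<and> (W - 1) / \<sigma> \<ge> max 2 (24/c) \<longrightarrow>
           (\<forall>\<mu> :: (nat \<Rightarrow> real \<times> real) measure.
              prob_space \<mu> \<and> sets \<mu> = sets (mu0 \<nu>0 W \<sigma>) \<and>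
              absolutely_continuous (mu0 \<nu>0 W \<sigma>) \<mu> \<longrightarrow>
              emeasure \<mu> (CJP_weighted W k) = 1)"
    using main_step[OF assms(1,2,3) c c_def] by blast
  thus ?thesis using k1 by blast
qed


end
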